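(* Let $F(V)$ be the set of formulas of $\mathrm{q}\L^{*}$ and define $p\sim q$ iff $\vdash p\leftrightarrow q$ (for $p,q\in F(V)$). Then $\sim$ is a congruence on $F(V)$ with respect to the connectives $\to$, $\neg$, ${}^{+}$ and ${}^{-}$.
   Context: Let $V=\{p_1,p_2,\ldots\}$ be a set of propositional variables and $F(V)$ the set of formulas built from $V$ and the constant $1$ with the binary connective $\to$ and the unary connectives $\neg$, ${}^{+}$, ${}^{-}$ (postfix ${}^+,{}^-$ bind tighter than $\neg$, which binds tighter than $\to$). Abbreviations: $p\vee q:=((p^{+}\to q^{+})^{+}\to(\neg p)^{-})\to((q^{-}\to p^{-})^{-}\to p^{-})$; an axiom written $A\leftrightarrow B$ stands for the two axioms $A\to B$ and $B\to A$, and $\vdash A\leftrightarrow B$ means $\vdash A\to B$ and $\vdash B\to A$. Axiom schemas of $\mathrm{q}\L^{*}$ (for all formulas $p,q,r$): (Q1) $(p\to q)\leftrightarrow(\neg q\to\neg p)$; (Q2) $1\leftrightarrow((1\to p)\to 1)$; (Q3) $p\leftrightarrow((q\to q)\to p)$; (Q4) $(p\to q)\leftrightarrow((q^{+}\to p^{-})\to(p^{+}\to q^{-}))$; (Q5) $\neg(p\to q)\leftrightarrow(q\to p)$; (Q6) $(p\to(\neg p\to q))^{+}\leftrightarrow(p^{+}\to(\neg p^{+}\to q^{+}))$; (Q7) $(p\to(q\vee r))\leftrightarrow((p\to r)\vee(p\to q))$; (Q8) $(p\vee(q\vee r))\leftrightarrow((p\vee q)\vee r)$; (Q9) $((p\to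 1)\to((q\to 1)\to r))\to((q\to 1)\to((p\to 1)\to r))$; (Q10) $p\to 1$; (Q11) $((1\to 1)\to p^{+})\leftrightarrow((p\to 1)\to 1)$ and $((1\to 1)\to p^{-})\leftrightarrow((p\to\neg 1)\to\neg 1)$. Deduction rules: (R1) from $p$ and $p\to q$ infer $(r\to r)\to q$; (R2) from $(r\to r)\to(p\to q)$ infer $p\to q$; (R3) from $p\to q$ and $r\to t$ infer $(q\to r)\to(p\to t)$. A proof of $q_n$ is a finite sequence $q_1,\dots,q_n$ each of which is an axiom or obtained from earlier members by a rule; then $\vdash q_n$. *)

theory Defs
  imports Main
begin

datatype fm =
    Var nat
  | One
  | Imp fm fm
  | Neg fm
  | Pl fm
  | Mi fm

definition Disj :: "fm \<Rightarrow> fm \<Rightarrow> fm" where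
  "Disj p q = Imp (Imp (Pl (Imp (Pl p) (Pl q))) (Mi (Neg p)))
                  (Imp (Mi (Imp (Mi q) (Mi p))) (Mi p))"

text \<open>Axiom schemas (Q1)--(Q11); each A \<leftrightarrow> B stands for A \<rightarrow> B and B \<rightarrow> A.\<close>

inductive axiom :: "fm \<Rightarrow> bool" where
  Q1a: "axiom (Imp (Imp p q) (Imp (Neg q) (Neg p)))"
| Q1b: "axiom (Imp (Imp (Neg q) (Neg p)) (Imp p q))"
| Q2a: "axiom (Imp One (Imp (Imp One p) One))"
| Q2b: "axiom (Imp (Imp (Imp One p) One) One)"
| Q3a: "axiom (Imp p (Imp (Imp q q) p))"
| Q3b: "axiom (Imp (Imp (Imp q q) p) p)"
| Q4a: "axiom (Imp (Imp p q) (Imp (Imp (Pl q) (Mi p)) (Imp (Pl p) (Mi q))))"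
| Q4b: "axiom (Imp (Imp (Imp (Pl q) (Mi p)) (Imp (Pl p) (Mi q))) (Imp p q))"
| Q5a: "axiom (Imp (Neg (Imp p q)) (Imp q p))"
| Q5b: "axiom (Imp (Imp q p) (Neg (Imp p q)))"
| Q6a: "axiom (Imp (Pl (Imp p (Imp (Neg p) q))) (Imp (Pl p) (Imp (Neg (Pl p)) (Pl q))))"
| Q6b: "axiom (Imp (Imp (Pl p) (Imp (Neg (Pl p)) (Pl q))) (Pl (Imp p (Imp (Neg p) q))))"
| Q7a: "axiom (Imp (Imp p (Disj q r)) (Disj (Imp p r) (Imp p q)))"
| Q7b: "axiom (Imp (Disj (Imp p r) (Imp p q)) (Imp p (Disj q r)))"
| Q8a: "axiom (Imp (Disj p (Disj q r)) (Disj (Disj p q) r))"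
| Q8b: "axiom (Imp (Disj (Disj p q) r) (Disj p (Disj q r)))"
| Q9: "axiom (Imp (Imp (Imp p One) (Imp (Imp q One) r))
                   (Imp (Imp q One) (Imp (Imp p One) r)))"
| Q10: "axiom (Imp p One)"
| Q11a: "axiom (Imp (Imp (Imp One One) (Pl p)) (Imp (Imp p One) One))"
| Q11b: "axiom (Imp (Imp (Imp p One) One) (Imp (Imp One One) (Pl p)))"
| Q11c: "axiom (Imp (Imp (Imp One One) (Mi p)) (Imp (Imp p (Neg One)) (Neg One)))"
| Q11d: "axiom (Imp (Imp (Imp p (Neg One)) (Neg One)) (Imp (Imp One One) (Mi p)))"

inductive prov :: "fm \<Rightarrow> bool" where
  ax: "axiom p \<Longrightarrow> prov p"
| R1: "prov p \<Longrightarrow> prov (Imp p q) \<Longrightarrow> prov (Imp (Imp r r) q)"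
| R2: "prov (Imp (Imp r r) (Imp p q)) \<Longrightarrow> prov (Imp p q)"
| R3: "prov (Imp p q) \<Longrightarrow> prov (Imp r t) \<Longrightarrow> prov (Imp (Imp q r) (Imp p t))"

definition equivfm :: "fm \<Rightarrow> fm \<Rightarrow> bool" where
  "equivfm p q \<longleftrightarrow> prov (Imp p q) \<and> prov (Imp q p)"

end

theory Submission
  imports Defs
begin

lemma mp: "prov p \<Longrightarrow> prov (Imp p (Imp a b)) \<Longrightarrow> prov (Imp a b)"
  using prov.R1[of p "Imp a b" One] prov.R2[of One a b] by blast

lemma trans': "prov (Imp a b) \<Longrightarrow> prov (Imp b c) \<Longrightarrow> prov (Imp a c)"
  using prov.R3[of a b b c] prov.R2[of b a c] by blast

lemma refl': "prov (Imp p p)"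
  using trans'[OF prov.ax[OF axiom.Q3a[of p One]] prov.ax[OF axiom.Q3b[of One p]]] .

lemma eq_refl: "equivfm p p" by (simp add: equivfm_def refl')
lemma eq_trans: "equivfm a b \<Longrightarrow> equivfm b c \<Longrightarrow> equivfm a c"
  unfolding equivfm_def using trans' by blast

lemma eq_sym: "equivfm a b \<Longrightarrow> equivfm b a" unfolding equivfm_def by blast

lemma eq_imp: "equivfm p p' \<Longrightarrow> equivfm q q' \<Longrightarrow> equivfm (Imp p q) (Imp p' q')"
  unfolding equivfm_def using prov.R3[of p' p q q'] prov.R3[of p p' q' q] by blast

lemma eq_neg: "equivfm p q \<Longrightarrow> equivfm (Neg p) (Neg q)"
  unfolding equivfm_def using mp[OF _ prov.ax[OF axiom.Q1a[of p q]]] mp[OF _ prov.ax[OF axiom.Q1a[of q p]]] by blast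

lemma eq_q3: "equivfm p (Imp (Imp One One) p)"
  unfolding equivfm_def using prov.ax[OF axiom.Q3a[of p One]] prov.ax[OF axiom.Q3b[of One p]] by blast

lemma eq_pl: "equivfm p q \<Longrightarrow> equivfm (Pl p) (Pl q)"
proof -
  assume h: "equivfm p q"
  have a: "equivfm (Imp (Imp One One) (Pl p)) (Imp (Imp p One) One)" for p
    unfolding equivfm_def using prov.ax[OF axiom.Q11a[of p]] prov.ax[OF axiom.Q11b[of p]] by blast
  have "equivfm (Imp (Imp p One) One) (Imp (Imp q One) One)"
    using eq_imp[OF eq_imp[OF h eq_refl] eq_refl] .
  note b = this
  have c: "equivfm (Imp (Imp One One) (Pl p)) (Imp (Imp One One) (Pl q))"
    using eq_trans[OF eq_trans[OF a b] eq_sym[OF a]] .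
  show ?thesis using eq_trans[OF eq_trans[OF eq_q3 c] eq_sym[OF eq_q3]] .
qed

lemma eq_mi: "equivfm p q \<Longrightarrow> equivfm (Mi p) (Mi q)"
proof -
  assume h: "equivfm p q"
  have a: "equivfm (Imp (Imp One One) (Mi p)) (Imp (Imp p (Neg One)) (Neg One))" for p
    unfolding equivfm_def using prov.ax[OF axiom.Q11c[of p]] prov.ax[OF axiom.Q11d[of p]] by blast
  have "equivfm (Imp (Imp p (Neg One)) (Neg One)) (Imp (Imp q (Neg One)) (Neg One))"
    using eq_imp[OF eq_imp[OF h eq_refl] eq_refl] .
  note b = this
  have c: "equivfm (Imp (Imp One One) (Mi p)) (Imp (Imp One One) (Mi q))"
    using eq_trans[OF eq_trans[OF a b] eq_sym[OF a]] .
  show ?thesis using eq_trans[OF eq_trans[OF eq_q3 c] eq_sym[OF eq_q3]] .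
qed

theorem proposition5p2:
  shows "equiv UNIV {(p, q). equivfm p q}
    \<and> (\<forall>p q p' q'. equivfm p p' \<and> equivfm q q' \<longrightarrow> equivfm (Imp p q) (Imp p' q'))
    \<and> (\<forall>p q. equivfm p q \<longrightarrow> equivfm (Neg p) (Neg q))
    \<and> (\<forall>p q. equivfm p q \<longrightarrow> equivfm (Pl p) (Pl q))
    \<and> (\<forall>p q. equivfm p q \<longrightarrow> equivfm (Mi p) (Mi q))"
proof (intro conjI allI impI)
  show "equiv UNIV {(p, q). equivfm p q}"
    unfolding equiv_def refl_on_def sym_def trans_def
    using eq_refl eq_trans eq_sym by blast
qed (simp_all add: eq_imp eq_neg eq_pl eq_mi)

end
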